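(* Let $X$ be a separable metric space with Borel $\sigma$-algebra $\mathcal B(X)$ and universal $\sigma$-algebra $\mathscr U(X)$, and let $\mathbb P$ be the completion of a (probability) measure on $\mathcal B(X)$ restricted to $\mathscr U(X)$. Let $A\mapsto A^\epsilon$ be a set operation on subsets of $X$ such that $A^\epsilon\in\mathscr U(X)$ whenever $A\in\mathscr U(X)$, and such that for every sequence of sets $\{A_n\}$, $$\bigcup_{n\in\mathbb N}A_n^\epsilon=\Big(\bigcup_{n\in\mathbb N}A_n\Big)^\epsilon,\qquad \bigcap_{n\in\mathbb N}A_n^\epsilon\supseteq\Big(\bigcap_{n\in\mathbb N}A_n\Big)^\epsilon.$$ Define $R^\epsilon(A)=\int(1-\eta(x))\mathbb 1_{A^\epsilon}(x)+\eta(x)\mathbb 1_{(A^C)^\epsilon}(x)\,d\mathbb P$ for $A\in\mathscr U(X)$. Assume that, given any decreasing minimizing sequence $\{B_n\}\subseteq\mathscr U(X)$ of $R^\epsilon$, one can find a decreasing minimizing sequence $\{C_n\}\subseteq\mathscr U(X)$ for which $\bigcap_{n=1}^\infty C_n^\epsilon\subseteq\big(\bigcap_{n=1}^\infty C_n\big)^\epsilon$ up to a $\mathbb P$-null set. Then there exists a minimizer of $R^\epsilon$ in $\mathscr U(X)$.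
   Context: $\mathcal D$ is a probability distribution on $X\times\{-1,+1\}$, $\eta(x)=\mathcal D(Y=+1\mid x)\in[0,1]$ is measurable, and $\mathbb P$ is the marginal on $X$. $\mathscr U(X)$ is the intersection over all $\sigma$-finite Borel measures $\nu$ on $X$ of the completion $\sigma$-algebras $\mathcal L_\nu(X)$. A sequence $\{A_n\}\subseteq\mathscr U(X)$ is minimizing if $R^\epsilon(A_n)\to\inf_{S\in\mathscr U(X)}R^\epsilon(S)$; it is decreasing if $A_{n+1}\subseteq A_n$. *)

theory Defs
  imports "HOL-Probability.Probability"
begin

definition universal_sets :: "'a::topological_space set set" where
  "universal_sets = \<Inter> {sets (completion \<nu>) | \<nu>. sets \<nu> = sets (borel :: 'a measure) \<and> sigma_finite_measure \<nu>}"

definition adv_risk ::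
  "'a measure \<Rightarrow> ('a \<Rightarrow> real) \<Rightarrow> ('a set \<Rightarrow> 'a set) \<Rightarrow> 'a set \<Rightarrow> real" where
  "adv_risk \<mu> \<eta> eps A =
     (\<integral>x. (1 - \<eta> x) * indicator (eps A) x + \<eta> x * indicator (eps (- A)) x \<partial>completion \<mu>)"

definition minimizing_seq ::
  "'a::topological_space measure \<Rightarrow> ('a \<Rightarrow> real) \<Rightarrow> ('a set \<Rightarrow> 'a set) \<Rightarrow> (nat \<Rightarrow> 'a set) \<Rightarrow> bool" where
  "minimizing_seq \<mu> \<eta> eps A \<longleftrightarrow>
     (\<forall>n. A n \<in> universal_sets) \<and>
     (\<lambda>n. adv_risk \<mu> \<eta> eps (A n)) \<longlonglongrightarrow> (INF S\<in>universal_sets. adv_risk \<mu> \<eta> eps S)"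

end

theory Submission
  imports Defs
begin

primrec Dseq :: "(nat \<Rightarrow> 'a set) \<Rightarrow> nat \<Rightarrow> nat \<Rightarrow> 'a set" where
  "Dseq A n 0 = A n"
| "Dseq A n (Suc j) = Dseq A n j \<union> A (n + Suc j)"

lemma Dseq_eq: "Dseq A n j = (\<Union>k\<le>j. A (n + k))"
  by (induction j) (auto simp: atMost_Suc)

lemma Dseq_UN: "(\<Union>j. Dseq A n j) = (\<Union>k. A (n + k))"
  unfolding Dseq_eq by auto

lemma UN_two: "(\<Union>n::nat. g (if n = 0 then X else Y)) = g X \<union> g Y"
proof -
  have "range (\<lambda>n::nat. if n = 0 then X else Y) = {X, Y}"
    by (auto simp: image_def)
  then have "(\<Union>n::nat. g (if n = 0 then X else Y)) = \<Union>(g ` {X, Y})"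
    by (metis image_image)
  then show ?thesis by simp
qed

lemma U_iff: "A \<in> universal_sets \<longleftrightarrow>
  (\<forall>\<nu>. sets \<nu> = sets (borel :: 'a::topological_space measure) \<and> sigma_finite_measure \<nu> \<longrightarrow> A \<in> sets (completion \<nu>))"
  by (auto simp: universal_sets_def)

lemma space_borel_eq: "sets \<nu> = sets (borel :: 'a::topological_space measure) \<Longrightarrow> space (completion \<nu>) = UNIV"
  using sets_eq_imp_space_eq by fastforce

lemma U_compl: "(A::'a::topological_space set) \<in> universal_sets \<Longrightarrow> - A \<in> universal_sets"
  unfolding U_iff
proof (intro allI impI)
  fix \<nu> :: "'a measure"
  assume A: "\<forall>\<nu>. sets \<nu> = sets borel \<and> sigma_finite_measure \<nu> \<longrightarrow> A \<in> sets (completion \<nu>)"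
    and h: "sets \<nu> = sets borel \<and> sigma_finite_measure \<nu>"
  then have "space (completion \<nu>) - A \<in> sets (completion \<nu>)" by auto
  then show "- A \<in> sets (completion \<nu>)" using space_borel_eq[of \<nu>] h by (simp add: Compl_eq_Diff_UNIV)
qed

lemma U_UN: "(\<And>n::nat. (A n::'a::topological_space set) \<in> universal_sets) \<Longrightarrow> (\<Union>n. A n) \<in> universal_sets"
  unfolding U_iff by (auto intro!: sets.countable_UN'')

lemma U_INT: "(\<And>n::nat. (A n::'a::topological_space set) \<in> universal_sets) \<Longrightarrow> (\<Inter>n. A n) \<in> universal_sets"
proof -
  assume "\<And>n::nat. A n \<in> universal_sets"
  then have "(\<Union>n. - A n) \<in> universal_sets" by (intro U_UN U_compl)
  then have "- (\<Union>n. - A n) \<in> universal_sets" by (rule U_compl)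
  then show ?thesis by simp
qed

lemma U_Un: "(A::'a::topological_space set) \<in> universal_sets \<Longrightarrow> B \<in> universal_sets \<Longrightarrow> A \<union> B \<in> universal_sets"
  using U_UN[of "\<lambda>n. if n = 0 then A else B"] UN_two[of id A B] by (auto split: if_splits)

lemma U_Int: "(A::'a::topological_space set) \<in> universal_sets \<Longrightarrow> B \<in> universal_sets \<Longrightarrow> A \<inter> B \<in> universal_sets"
  using U_Un[of "-A" "-B"] U_compl by (metis compl_sup double_compl)

lemma U_empty: "({}::'a::topological_space set) \<in> universal_sets"
  unfolding U_iff by auto

locale advset =
  fixes \<mu> :: "'a::topological_space measure" and \<eta> :: "'a \<Rightarrow> real" and eps :: "'a set \<Rightarrow> 'a set"
  assumes P: "prob_space \<mu>" and S: "sets \<mu> = sets borel"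
    and eta_meas: "\<eta> \<in> borel_measurable borel"
    and eta_bd: "\<And>x. 0 \<le> \<eta> x \<and> \<eta> x \<le> 1"
    and epsU: "\<And>A. A \<in> universal_sets \<Longrightarrow> eps A \<in> universal_sets"
    and epsUn: "\<And>A :: nat \<Rightarrow> 'a set. (\<Union>n. eps (A n)) = eps (\<Union>n. A n)"
    and epsInt: "\<And>A :: nat \<Rightarrow> 'a set. eps (\<Inter>n. A n) \<subseteq> (\<Inter>n. eps (A n))"
begin

abbreviation "M \<equiv> completion \<mu>"
abbreviation "U \<equiv> (universal_sets :: 'a set set)"
definition "f A x = (1 - \<eta> x) * indicator (eps A) x + \<eta> x * indicator (eps (- A)) x"
abbreviation "R \<equiv> adv_risk \<mu> \<eta> eps"

lemma R_def': "R A = integral\<^sup>L M (f A)"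
  unfolding adv_risk_def f_def ..

lemma probM: "prob_space M"
proof (rule prob_spaceI)
  have "emeasure \<mu> (space \<mu>) = 1" using P by (simp add: prob_space.emeasure_space_1)
  then show "emeasure M (space M) = 1" by simp
qed

lemma U_M: "A \<in> U \<Longrightarrow> A \<in> sets M"
  using P S prob_space_imp_sigma_finite unfolding U_iff by blast

lemma epsM: "A \<in> U \<Longrightarrow> eps A \<in> sets M"
  using U_M epsU by blast

lemma eps_Un2: "eps (A \<union> B) = eps A \<union> eps B"
proof -
  have 1: "(\<Union>n::nat. (if n = 0 then A else B)) = A \<union> B" using UN_two[of id A B] by simp
  have 2: "(\<Union>n::nat. eps (if n = 0 then A else B)) = eps A \<union> eps B" using UN_two[of eps A B] by simp
  show ?thesis using epsUn[of "\<lambda>n. if n = 0 then A else B"] 1 2 by simp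
qed

lemma eps_mono: "A \<subseteq> B \<Longrightarrow> eps A \<subseteq> eps B"
  using eps_Un2[of A B] by (simp add: sup.absorb2) blast

lemma eta_M: "\<eta> \<in> borel_measurable M"
  by (rule measurable_completion) (simp add: measurable_cong_sets[OF S refl] eta_meas)

lemma f_meas: "A \<in> U \<Longrightarrow> f A \<in> borel_measurable M"
  unfolding f_def using eta_M epsM[of A] epsM[of "-A"] U_compl[of A]
  by (intro borel_measurable_add borel_measurable_times borel_measurable_diff
      borel_measurable_indicator) auto

lemma f_bd: "0 \<le> f A x \<and> f A x \<le> 1"
  using eta_bd[of x] unfolding f_def indicator_def by auto

lemma f_int: "A \<in> U \<Longrightarrow> integrable M (f A)"
proof -
  assume A: "A \<in> U"
  interpret M: prob_space M by (rule probM)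
  show ?thesis
    by (rule M.integrable_const_bound[where B=1]) (use f_bd f_meas[OF A] in auto)
qed

lemma ind_int: "X \<in> sets M \<Longrightarrow> integrable M (indicator X :: 'a \<Rightarrow> real)"
proof -
  assume X: "X \<in> sets M"
  interpret M: prob_space M by (rule probM)
  show ?thesis
    by (rule M.integrable_const_bound[where B=1]) (use X in auto)
qed

lemma R_nonneg: "0 \<le> R A"
  unfolding R_def' by (rule integral_nonneg_AE) (use f_bd in auto)

lemma R_bdd: "bdd_below (R ` U)"
  using R_nonneg by (intro bdd_belowI[where m=0]) auto

lemma R_inf_le: "S \<in> U \<Longrightarrow> (INF S\<in>U. R S) \<le> R S"
  by (rule cINF_lower[OF R_bdd])

lemma submod:
  assumes A: "A \<in> U" and B: "B \<in> U"
  shows "R (A \<union> B) + R (A \<inter> B) \<le> R A + R B"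
proof -
  have e1: "eps (A \<union> B) = eps A \<union> eps B" by (rule eps_Un2)
  have e2: "eps (A \<inter> B) \<subseteq> eps A \<inter> eps B" using eps_mono by auto
  have e3: "eps (- (A \<union> B)) \<subseteq> eps (-A) \<inter> eps (-B)" using eps_mono by auto
  have e4: "eps (- (A \<inter> B)) = eps (-A) \<union> eps (-B)" using eps_Un2[of "-A" "-B"] by simp
  have pw: "f (A \<union> B) x + f (A \<inter> B) x \<le> f A x + f B x" for x
    using eta_bd[of x] e1 e2 e3 e4 unfolding f_def indicator_def
    by (auto split: if_splits)
  have UAB: "A \<union> B \<in> U" "A \<inter> B \<in> U" using A B U_Un U_Int by auto
  have "R (A \<union> B) + R (A \<inter> B) = integral\<^sup>L M (\<lambda>x. f (A \<union> B) x + f (A \<inter> B) x)"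
    unfolding R_def' using f_int UAB by (simp add: integral_add)
  also have "\<dots> \<le> integral\<^sup>L M (\<lambda>x. f A x + f B x)"
    by (rule integral_mono) (use f_int UAB A B pw in auto)
  also have "\<dots> = R A + R B"
    unfolding R_def' using f_int A B by (simp add: integral_add)
  finally show ?thesis .
qed


lemma U_ne: "U \<noteq> {}" using U_empty by auto

lemma exists_dec_min: "\<exists>B. decseq B \<and> minimizing_seq \<mu> \<eta> eps B"
proof -
  define m where "m = (INF S\<in>U. R S)"
  have ex: "\<exists>A\<in>U. R A < m + (1/2)^k" for k :: nat
  proof -
    have "Inf (R ` U) < m + (1/2)^k" unfolding m_def by simp
    then show ?thesis using cInf_less_iff[of "R ` U"] R_bdd U_ne by auto
  qed
  then obtain A where A: "\<And>k. A k \<in> U" "\<And>k. R (A k) < m + (1/2)^k" by metis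
  define B where "B n = (\<Union>k. A (n + k))" for n
  have BU: "B n \<in> U" for n unfolding B_def by (intro U_UN A)
  have DU: "Dseq A n j \<in> U" for n j by (induction j) (auto intro: U_Un A)
  have mle: "X \<in> U \<Longrightarrow> m \<le> R X" for X unfolding m_def by (rule R_inf_le)
  have Dbd: "R (Dseq A n j) \<le> m + 2 * (1/2)^n - (1/2)^(n+j)" for n j
  proof (induction j)
    case 0
    then show ?case using A(2)[of n] by simp
  next
    case (Suc j)
    have "R (Dseq A n j \<union> A (n + Suc j)) + R (Dseq A n j \<inter> A (n + Suc j)) \<le> R (Dseq A n j) + R (A (n + Suc j))"
      by (rule submod) (use DU A in auto)
    moreover have "m \<le> R (Dseq A n j \<inter> A (n + Suc j))" by (intro mle U_Int DU A)
    moreover have "(1/2::real)^(n + Suc j) = (1/2)^(n+j) / 2" by simp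
    ultimately show ?case using Suc A(2)[of "n + Suc j"] by simp
  qed
  interpret M: prob_space M by (rule probM)
  have Bbd: "R (B n) \<le> m + 2 * (1/2)^n" for n
  proof -
    let ?D = "\<lambda>j. Dseq A n j"
    have DB: "?D j \<subseteq> B n" for j unfolding B_def using Dseq_UN[of A n] by blast
    have UD: "(\<Union>j. eps (?D j)) = eps (B n)" unfolding epsUn Dseq_UN B_def ..
    have lim: "(\<lambda>j. measure M (eps (?D j))) \<longlonglongrightarrow> measure M (eps (B n))"
      unfolding UD[symmetric]
    proof (rule M.finite_Lim_measure_incseq)
      show "range (\<lambda>j. eps (?D j)) \<subseteq> sets M" using epsM DU by auto
      show "incseq (\<lambda>j. eps (?D j))" by (rule incseq_SucI) (auto intro!: eps_mono)
    qed
    have step: "R (B n) \<le> m + 2 * (1/2)^n + (measure M (eps (B n)) - measure M (eps (?D j)))" for j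
    proof -
      have pw: "f (B n) x \<le> f (?D j) x + indicator (eps (B n) - eps (?D j)) x" for x
      proof -
        have "eps (- B n) \<subseteq> eps (- ?D j)" using DB by (intro eps_mono) auto
        then show ?thesis using eta_bd[of x] unfolding f_def indicator_def by (auto split: if_splits)
      qed
      have sD: "eps (B n) - eps (?D j) \<in> sets M" using epsM BU DU by auto
      have sp: "(eps (B n) - eps (?D j)) \<inter> space \<mu> = eps (B n) - eps (?D j)"
          using sets.sets_into_space[OF sD] by auto
      have "R (B n) \<le> integral\<^sup>L M (\<lambda>x. f (?D j) x + indicator (eps (B n) - eps (?D j)) x)"
        unfolding R_def' by (rule integral_mono) (use f_int BU DU ind_int[OF sD] pw in auto)
      also have "\<dots> = R (?D j) + measure M (eps (B n) - eps (?D j))"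
        unfolding R_def' using f_int DU ind_int[OF sD] sD sp by (simp add: integral_add)
      also have "measure M (eps (B n) - eps (?D j)) = measure M (eps (B n)) - measure M (eps (?D j))"
        by (rule M.finite_measure_Diff) (use epsM BU DU DB eps_mono in auto)
      moreover have "0 \<le> (1/2::real)^(n+j)" by simp
      ultimately show ?thesis using Dbd[of n j] by linarith
    qed
    have "(\<lambda>j. m + 2 * (1/2)^n + (measure M (eps (B n)) - measure M (eps (?D j)))) \<longlonglongrightarrow>
           m + 2 * (1/2)^n + (measure M (eps (B n)) - measure M (eps (B n)))"
      by (intro tendsto_intros lim)
    then have "(\<lambda>j. m + 2 * (1/2)^n + (measure M (eps (B n)) - measure M (eps (?D j)))) \<longlonglongrightarrow>
           m + 2 * (1/2)^n" by simp
    then show ?thesis by (rule LIMSEQ_le_const) (use step in auto)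
  qed
  have "decseq B"
    by (rule decseq_SucI) (auto simp: B_def, metis add_Suc_right add_Suc)
  moreover have "(\<lambda>n. R (B n)) \<longlonglongrightarrow> m"
  proof (rule tendsto_sandwich[where f="\<lambda>_. m" and h="\<lambda>n. m + 2 * (1/2)^n"])
    show "\<forall>\<^sub>F n in sequentially. m \<le> R (B n)" using mle BU by auto
    show "\<forall>\<^sub>F n in sequentially. R (B n) \<le> m + 2 * (1/2)^n" using Bbd by auto
    have "(\<lambda>n. m + 2 * (1/2::real)^n) \<longlonglongrightarrow> m + 2 * 0"
      by (intro tendsto_intros LIMSEQ_realpow_zero) auto
    then show "(\<lambda>n. m + 2 * (1/2::real)^n) \<longlonglongrightarrow> m" by simp
  qed simp
  ultimately show ?thesis unfolding minimizing_seq_def m_def using BU by auto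
qed

lemma limit_min:
  assumes dec: "decseq C" and min: "minimizing_seq \<mu> \<eta> eps C"
    and ae: "AE x in M. x \<in> (\<Inter>n. eps (C n)) \<longrightarrow> x \<in> eps (\<Inter>n. C n)"
  shows "\<exists>A\<in>U. \<forall>S\<in>U. R A \<le> R S"
proof -
  interpret M: prob_space M by (rule probM)
  have CU: "C n \<in> U" for n using min unfolding minimizing_seq_def by auto
  define Ci where "Ci = (\<Inter>n. C n)"
  have CiU: "Ci \<in> U" unfolding Ci_def by (intro U_INT CU)
  have lim: "(\<lambda>n. integral\<^sup>L M (f (C n))) \<longlonglongrightarrow> integral\<^sup>L M (f Ci)"
  proof (rule integral_dominated_convergence[where w="\<lambda>_. 1"])
    show "f Ci \<in> borel_measurable M" by (rule f_meas[OF CiU])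
    show "f (C n) \<in> borel_measurable M" for n by (rule f_meas[OF CU])
    show "integrable M (\<lambda>_. 1::real)" by simp
    show "AE x in M. norm (f (C n) x) \<le> 1" for n using f_bd by auto
    show "AE x in M. (\<lambda>n. f (C n) x) \<longlonglongrightarrow> f Ci x"
      using ae
    proof eventually_elim
      case (elim x)
      have d1: "decseq (\<lambda>n. eps (C n))" using dec unfolding decseq_def by (metis eps_mono)
      have i1: "incseq (\<lambda>n. eps (- C n))" using dec unfolding decseq_def incseq_def
        by (auto intro!: eps_mono)
      have t1: "(\<lambda>n. indicator (eps (C n)) x :: real) \<longlonglongrightarrow> indicator (\<Inter>n. eps (C n)) x"
        by (rule LIMSEQ_indicator_decseq[OF d1])
      have "eps Ci \<subseteq> (\<Inter>n. eps (C n))" unfolding Ci_def by (rule epsInt)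
      then have e1: "indicator (\<Inter>n. eps (C n)) x = (indicator (eps Ci) x :: real)"
        using elim unfolding Ci_def indicator_def by auto
      have t2: "(\<lambda>n. indicator (eps (- C n)) x :: real) \<longlonglongrightarrow> indicator (\<Union>n. eps (- C n)) x"
        by (rule LIMSEQ_indicator_incseq[OF i1])
      have e2: "(\<Union>n. eps (- C n)) = eps (- Ci)" unfolding epsUn Ci_def by simp
      show ?case unfolding f_def
        by (intro tendsto_intros) (use t1 t2 e1 e2 in auto)
    qed
  qed
  have "(\<lambda>n. R (C n)) \<longlonglongrightarrow> (INF S\<in>U. R S)" using min unfolding minimizing_seq_def by auto
  then have "R Ci = (INF S\<in>U. R S)" using lim unfolding R_def' by (rule LIMSEQ_unique[rotated])
  then show ?thesis using CiU R_inf_le by metis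
qed

end

theorem theorem10:
  fixes \<mu> :: "'a::{metric_space, second_countable_topology} measure"
    and \<eta> :: "'a \<Rightarrow> real"
    and eps :: "'a set \<Rightarrow> 'a set"
  assumes "prob_space \<mu>"
    and "sets \<mu> = sets borel"
    and "\<eta> \<in> borel_measurable borel"
    and "\<And>x. 0 \<le> \<eta> x \<and> \<eta> x \<le> 1"
    and "\<And>A. A \<in> universal_sets \<Longrightarrow> eps A \<in> universal_sets"
    and "\<And>A :: nat \<Rightarrow> 'a set. (\<Union>n. eps (A n)) = eps (\<Union>n. A n)"
    and "\<And>A :: nat \<Rightarrow> 'a set. eps (\<Inter>n. A n) \<subseteq> (\<Inter>n. eps (A n))"
    and "\<And>B. decseq B \<Longrightarrow> minimizing_seq \<mu> \<eta> eps B \<Longrightarrow>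
           \<exists>C. decseq C \<and> minimizing_seq \<mu> \<eta> eps C \<and>
               (AE x in completion \<mu>. x \<in> (\<Inter>n. eps (C n)) \<longrightarrow> x \<in> eps (\<Inter>n. C n))"
  shows "\<exists>A\<in>universal_sets. \<forall>S\<in>universal_sets. adv_risk \<mu> \<eta> eps A \<le> adv_risk \<mu> \<eta> eps S"
proof -
  interpret advset \<mu> \<eta> eps
    by (rule advset.intro[OF assms(1-7)])
  obtain B where "decseq B" "minimizing_seq \<mu> \<eta> eps B" using exists_dec_min by blast
  then obtain C where "decseq C" "minimizing_seq \<mu> \<eta> eps C"
    "AE x in completion \<mu>. x \<in> (\<Inter>n. eps (C n)) \<longrightarrow> x \<in> eps (\<Inter>n. C n)"
    using assms(8) by blast
  then show ?thesis by (rule limit_min)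
qed

end
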